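(* If $k\in\mathbb{N}$, $k\ge2$, and $u(x)=e^{ix^{2k}}$, $x\in\mathbb{R}$, then $$WF(u)=\{0\}\times(\mathbb{R}\setminus\{0\}).$$
   Context: $WF$ is the Gabor wave front set: for $u\in\mathscr{S}'(\mathbb{R})$, $z_0\in T^*\mathbb{R}\setminus\{0\}$ is not in $WF(u)$ iff there is an open conic set $\Gamma\ni z_0$ with $\sup_{z\in\Gamma}\langle z\rangle^N|V_\varphi u(z)|<\infty$ for all $N\ge0$, where $V_\varphi u(x,\xi)=\int u(y)\overline{\varphi(y-x)}e^{-iy\xi}dy$, $\varphi\in\mathscr{S}(\mathbb{R})\setminus\{0\}$. *)

theory Defs
  imports "HOL-Analysis.Analysis"
begin

definition nth_deriv :: "nat \<Rightarrow> (real \<Rightarrow> complex) \<Rightarrow> real \<Rightarrow> complex" where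
  "nth_deriv n f = ((\<lambda>g x. vector_derivative g (at x)) ^^ n) f"

definition schwartz :: "(real \<Rightarrow> complex) \<Rightarrow> bool" where
  "schwartz f \<longleftrightarrow>
     (\<forall>n x. nth_deriv n f differentiable (at x)) \<and>
     (\<forall>a b::nat. \<exists>C. \<forall>x. \<bar>x\<bar> ^ a * norm (nth_deriv b f x) \<le> C)"

definition stft :: "(real \<Rightarrow> complex) \<Rightarrow> (real \<Rightarrow> complex) \<Rightarrow> real \<times> real \<Rightarrow> complex" where
  "stft \<phi> u z = (LINT y|lborel. u y * cnj (\<phi> (y - fst z)) * exp (- \<i> * complex_of_real (y * snd z)))"

definition conic :: "(real \<times> real) set \<Rightarrow> bool" where
  "conic \<Gamma> \<longleftrightarrow> (\<forall>z\<in>\<Gamma>. \<forall>t::real. t > 0 \<longrightarrow> t *\<^sub>R z \<in> \<Gamma>)"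

definition gabor_WF :: "(real \<Rightarrow> complex) \<Rightarrow> (real \<Rightarrow> complex) \<Rightarrow> (real \<times> real) set" where
  "gabor_WF \<phi> u = {z0. z0 \<noteq> 0 \<and>
     \<not> (\<exists>\<Gamma>. open \<Gamma> \<and> conic \<Gamma> \<and> z0 \<in> \<Gamma> \<and>
          (\<forall>N::real. N \<ge> 0 \<longrightarrow>
             (\<exists>C. \<forall>z\<in>\<Gamma>. (sqrt (1 + (norm z)\<^sup>2)) powr N * norm (stft \<phi> u z) \<le> C)))}"

end

theory Submission
  imports Defs "HOL-Probability.Probability" "HOL-Real_Asymp.Real_Asymp"
begin


lemma nd_Suc: "nth_deriv (Suc n) f = (\<lambda>x. vector_derivative (nth_deriv n f) (at x))"
  by (simp add: nth_deriv_def)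
lemma nd_0: "nth_deriv 0 f = f" by (simp add: nth_deriv_def)

lemma schwartz_D:
  assumes "schwartz f"
  shows "(nth_deriv n f has_vector_derivative nth_deriv (Suc n) f x) (at x within S)"
proof -
  have "nth_deriv n f differentiable (at x)" using assms by (simp add: schwartz_def)
  hence "(nth_deriv n f has_vector_derivative vector_derivative (nth_deriv n f) (at x)) (at x)"
    using vector_derivative_works by blast
  thus ?thesis by (simp add: nd_Suc has_vector_derivative_at_within)
qed

lemma schwartz_cont: "schwartz f \<Longrightarrow> continuous_on S (nth_deriv n f)"
  by (rule continuous_on_vector_derivative) (rule schwartz_D)

lemma schwartz_isCont: "schwartz f \<Longrightarrow> isCont (nth_deriv n f) x"
  using schwartz_D has_vector_derivative_continuous by blast

lemma schwartz_bound1: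
  assumes "schwartz f" shows "\<exists>C. \<forall>t. (1 + \<bar>t\<bar>)^a * norm (nth_deriv b f t) \<le> C"
proof -
  obtain C1 where C1: "\<forall>t. \<bar>t\<bar>^a * norm (nth_deriv b f t) \<le> C1" using assms schwartz_def by blast
  obtain C0 where C0: "\<forall>t. \<bar>t\<bar>^0 * norm (nth_deriv b f t) \<le> C0" using assms schwartz_def by blast
  show ?thesis
  proof (intro exI allI)
    fix t :: real
    have pw: "(1+\<bar>t\<bar>)^a \<le> 2^a * (1 + \<bar>t\<bar>^a)"
    proof (cases "\<bar>t\<bar> \<le> 1")
      case True
      hence "(1+\<bar>t\<bar>)^a \<le> 2^a" using power_mono[of "1+\<bar>t\<bar>" 2 a] by auto
      moreover have "(0::real) \<le> 2^a * \<bar>t\<bar>^a" by simp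
      ultimately show ?thesis by (simp add: distrib_left add_increasing2)
    next
      case False
      hence "(1+\<bar>t\<bar>)^a \<le> (2*\<bar>t\<bar>)^a" using power_mono[of "1+\<bar>t\<bar>" "2*\<bar>t\<bar>" a] by auto
      moreover have "(0::real) \<le> 2^a" by simp
      ultimately show ?thesis by (simp add: power_mult_distrib distrib_left add_increasing)
    qed
    have "(1+\<bar>t\<bar>)^a * norm (nth_deriv b f t) \<le> 2^a * (1 + \<bar>t\<bar>^a) * norm (nth_deriv b f t)"
      using pw by (intro mult_right_mono) auto
    also have "\<dots> = 2^a * (\<bar>t\<bar>^0 * norm (nth_deriv b f t) + \<bar>t\<bar>^a * norm (nth_deriv b f t))"
      by (simp add: algebra_simps)
    also have "\<dots> \<le> 2^a * (C0 + C1)"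
      using C0 C1 by (intro mult_left_mono add_mono) auto
    finally show "(1+\<bar>t\<bar>)^a * norm (nth_deriv b f t) \<le> 2^a * (C0 + C1)" .
  qed
qed

definition win :: "(real \<Rightarrow> complex) \<Rightarrow> nat \<Rightarrow> nat \<Rightarrow> real \<Rightarrow> complex" where
  "win f j n t = (complex_of_real t)^j * cnj (nth_deriv n f t)"

lemma win_bound:
  assumes "schwartz f" shows "\<exists>C. \<forall>t. norm (win f j n t) \<le> C * inverse (1 + t\<^sup>2)"
proof -
  obtain C where C: "\<forall>t. (1 + \<bar>t\<bar>)^(j+2) * norm (nth_deriv n f t) \<le> C"
    using schwartz_bound1[OF assms] by blast
  show ?thesis
  proof (intro exI allI)
    fix t :: real
    have p: "0 < 1 + t\<^sup>2" by (simp add: add_pos_nonneg)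
    have q: "1 + t\<^sup>2 \<le> (1 + \<bar>t\<bar>)^2" by (simp add: power2_eq_square algebra_simps)
    have "norm (win f j n t) * (1 + t\<^sup>2) = \<bar>t\<bar>^j * norm (nth_deriv n f t) * (1 + t\<^sup>2)"
      by (simp add: win_def norm_mult norm_power)
    also have "\<dots> \<le> (1+\<bar>t\<bar>)^j * norm (nth_deriv n f t) * (1 + \<bar>t\<bar>)^2"
      using q by (intro mult_mono power_mono) auto
    also have "\<dots> = (1 + \<bar>t\<bar>)^(j+2) * norm (nth_deriv n f t)"
      by (simp add: power_add power2_eq_square mult.commute mult.left_commute)
    also have "\<dots> \<le> C" using C by blast
    finally show "norm (win f j n t) \<le> C * inverse (1 + t\<^sup>2)"
      using p by (simp add: field_simps)
  qed
qed

lemma win_deriv: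
  assumes "schwartz f"
  shows "(win f j n has_vector_derivative (of_nat j * win f (j-1) n t + win f j (Suc n) t)) (at t within S)"
proof -
  have d1: "((\<lambda>t. of_real (t^j) :: complex) has_vector_derivative of_real (real j * t^(j - Suc 0))) (at t within S)"
    by (intro has_vector_derivative_of_real DERIV_pow)
  have d2: "((\<lambda>t. cnj (nth_deriv n f t)) has_vector_derivative cnj (nth_deriv (Suc n) f t)) (at t within S)"
    by (intro has_vector_derivative_cnj schwartz_D assms)
  have "((\<lambda>t. of_real (t^j) * cnj (nth_deriv n f t)) has_vector_derivative
     (of_real (t^j) * cnj (nth_deriv (Suc n) f t) + of_real (real j * t^(j - Suc 0)) * cnj (nth_deriv n f t))) (at t within S)"
    by (rule has_vector_derivative_mult[OF d1 d2])
  moreover have "(\<lambda>t. of_real (t^j) * cnj (nth_deriv n f t)) = win f j n"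
    by (auto simp: win_def)
  moreover have "of_real (t^j) * cnj (nth_deriv (Suc n) f t) + of_real (real j * t^(j - Suc 0)) * cnj (nth_deriv n f t)
     = of_nat j * win f (j-1) n t + win f j (Suc n) t"
    by (simp add: win_def)
  ultimately show ?thesis by simp
qed

lemma win_cont: "schwartz f \<Longrightarrow> continuous_on S (win f j n)"
  by (rule continuous_on_vector_derivative) (rule win_deriv)

lemma win_isCont: "schwartz f \<Longrightarrow> isCont (win f j n) x"
  using win_deriv has_vector_derivative_continuous by blast

lemma win_meas[measurable]: "schwartz f \<Longrightarrow> win f j n \<in> borel_measurable borel"
  by (intro borel_measurable_continuous_onI win_cont)

lemma integrable_inv_sq: "integrable lborel (\<lambda>x::real. inverse (1 + x^2))"
  using integrable_inverse_1_plus_square by (simp add: set_integrable_def)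

lemma integral_inv_sq: "(\<integral>x. inverse (1 + x^2) \<partial>lborel) = pi"
  using LBINT_inverse_1_plus_square by (simp add: interval_lebesgue_integral_def set_lebesgue_integral_def)


lemma integral_deriv_zero:
  fixes F f :: "real \<Rightarrow> complex"
  assumes der: "\<And>x. (F has_vector_derivative f x) (at x)"
    and cont: "continuous_on UNIV f" and int: "integrable lborel f"
    and top: "(F \<longlongrightarrow> 0) at_top" and bot: "(F \<longlongrightarrow> 0) at_bot"
  shows "integral\<^sup>L lborel f = 0"
proof -
  have eq: "integral\<^sup>L lborel (\<lambda>x. indicator {-real n..real n} x *\<^sub>R f x) = F (real n) - F (- real n)" for n::nat
    by (rule integral_FTC_atLeastAtMost) (auto intro: has_vector_derivative_at_within der continuous_on_subset[OF cont])
  have fm: "f \<in> borel_measurable lborel" using int by auto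
  have lim1: "(\<lambda>n::nat. integral\<^sup>L lborel (\<lambda>x. indicator {-real n..real n} x *\<^sub>R f x)) \<longlonglongrightarrow> integral\<^sup>L lborel f"
  proof (rule integral_dominated_convergence[where w="\<lambda>x. norm (f x)"])
    show "integrable lborel (\<lambda>x. norm (f x))" using int by simp
    show "(\<lambda>x. indicator {- real n..real n} x *\<^sub>R f x) \<in> borel_measurable lborel" for n
      using fm by measurable
    show "f \<in> borel_measurable lborel" by (rule fm)
    show "AE x in lborel. (\<lambda>n. indicator {- real n..real n} x *\<^sub>R f x) \<longlonglongrightarrow> f x"
    proof (rule AE_I2)
      fix x :: real
      obtain N :: nat where N: "\<bar>x\<bar> \<le> real N" using real_arch_simple by blast
      have "eventually (\<lambda>n. indicator {- real n..real n} x *\<^sub>R f x = f x) sequentially"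
        unfolding eventually_sequentially
        by (rule exI[of _ N]) (use N in \<open>auto simp: indicator_def\<close>)
      thus "(\<lambda>n. indicator {- real n..real n} x *\<^sub>R f x) \<longlonglongrightarrow> f x"
        by (rule tendsto_eventually)
    qed
    show "AE x in lborel. norm (indicator {- real n..real n} x *\<^sub>R f x) \<le> norm (f x)" for n
      by (auto simp: indicator_def)
  qed
  have t1: "(\<lambda>n::nat. F (real n)) \<longlonglongrightarrow> 0"
    by (rule filterlim_compose[OF top filterlim_real_sequentially])
  have t2: "(\<lambda>n::nat. F (- real n)) \<longlonglongrightarrow> 0"
    by (rule filterlim_compose[OF bot filterlim_compose[OF filterlim_uminus_at_bot_at_top filterlim_real_sequentially]])
  have lim2: "(\<lambda>n::nat. F (real n) - F (- real n)) \<longlonglongrightarrow> 0"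
    using tendsto_diff[OF t1 t2] by simp
  show ?thesis using LIMSEQ_unique[OF lim1] lim2 eq by simp
qed

definition EE :: "nat \<Rightarrow> real \<Rightarrow> real \<Rightarrow> complex" where
  "EE k \<xi> y = exp (\<i> * complex_of_real (y^(2*k) - y * \<xi>))"

definition Ig :: "(real \<Rightarrow> complex) \<Rightarrow> nat \<Rightarrow> nat \<Rightarrow> nat \<Rightarrow> real \<Rightarrow> real \<Rightarrow> complex" where
  "Ig f k j n x \<xi> = (\<integral>y. EE k \<xi> y * win f j n (y - x) \<partial>lborel)"

lemma norm_EE[simp]: "norm (EE k \<xi> y) = 1"
  unfolding EE_def by (rule norm_exp_i_times)

lemma EE_cont: "continuous_on S (EE k \<xi>)"
  unfolding EE_def by (intro continuous_intros)

lemma inv_sq_shift: "integrable lborel (\<lambda>y::real. inverse (1 + (y - x)^2))"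
proof -
  have "integrable lborel (\<lambda>y. inverse (1 + (- x + 1 * y)^2))"
    by (rule lborel_integrable_real_affine[OF integrable_inv_sq]) simp
  thus ?thesis by simp
qed

lemma integral_inv_sq_shift: "(\<integral>y. inverse (1 + (y - x)^2) \<partial>lborel) = pi"
proof -
  have "(\<integral>y. inverse (1 + y^2) \<partial>lborel) = \<bar>1\<bar> *\<^sub>R (\<integral>y. inverse (1 + (- x + 1 * y)^2) \<partial>lborel)"
    by (rule lborel_integral_real_affine) simp
  thus ?thesis using integral_inv_sq by simp
qed

lemma win_shift_bound:
  assumes "schwartz f"
  shows "\<exists>C. \<forall>x y. norm (win f j n (y - x)) \<le> C * inverse (1 + (y - x)\<^sup>2)"
  using win_bound[OF assms] by blast

lemma integrable_Ig:
  assumes "schwartz f"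
  shows "integrable lborel (\<lambda>y. EE k \<xi> y * win f j n (y - x))"
proof -
  obtain C where C: "\<forall>t. norm (win f j n t) \<le> C * inverse (1 + t\<^sup>2)" using win_bound[OF assms] by blast
  show ?thesis
  proof (rule Bochner_Integration.integrable_bound[where f="\<lambda>y::real. C * inverse (1 + (y - x)^2)"])
    show "integrable lborel (\<lambda>y. C * inverse (1 + (y - x)^2))"
      using inv_sq_shift by simp
    have "continuous_on UNIV (\<lambda>y. EE k \<xi> y * win f j n (y - x))"
      by (intro continuous_intros EE_cont continuous_on_compose2[OF win_cont[OF assms]]) auto
    thus "(\<lambda>y. EE k \<xi> y * win f j n (y - x)) \<in> borel_measurable lborel"
      by (simp add: borel_measurable_continuous_onI)
    show "AE y in lborel. norm (EE k \<xi> y * win f j n (y - x)) \<le> norm (C * inverse (1 + (y - x)^2))"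
      using C by (auto simp: norm_mult intro: order_trans[OF _ abs_ge_self])
  qed
qed

lemma Ig_base:
  assumes "schwartz f"
  shows "\<exists>C. \<forall>x \<xi>. norm (Ig f k j n x \<xi>) \<le> C"
proof -
  obtain C where C: "\<forall>t. norm (win f j n t) \<le> C * inverse (1 + t\<^sup>2)" using win_bound[OF assms] by blast
  show ?thesis
  proof (intro exI allI)
    fix x \<xi>
    have "norm (Ig f k j n x \<xi>) \<le> (\<integral>y. norm (EE k \<xi> y * win f j n (y - x)) \<partial>lborel)"
      unfolding Ig_def by (rule integral_norm_bound)
    also have "\<dots> \<le> (\<integral>y. C * inverse (1 + (y - x)^2) \<partial>lborel)"
      by (intro integral_mono integrable_norm integrable_Ig assms) 
         (use C inv_sq_shift in \<open>auto simp: norm_mult\<close>)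
    also have "\<dots> = C * pi" using integral_inv_sq_shift by simp
    finally show "norm (Ig f k j n x \<xi>) \<le> C * pi" .
  qed
qed


lemma EE_deriv:
  "(EE k \<xi> has_vector_derivative (\<i> * complex_of_real (real (2*k) * y^(2*k-1) - \<xi>) * EE k \<xi> y)) (at y)"
proof -
  let ?h = "\<lambda>z::complex. exp (\<i> * (z^(2*k) - z * of_real \<xi>))"
  have "(?h has_field_derivative ?h (of_real y) * (\<i> * (of_nat (2*k) * (of_real y)^(2*k-1) - of_real \<xi>))) (at (of_real y))"
    by (rule derivative_eq_intros refl | simp)+
  hence "((\<lambda>y. ?h (of_real y)) has_vector_derivative ?h (of_real y) * (\<i> * (of_nat (2*k) * (of_real y)^(2*k-1) - of_real \<xi>))) (at y)"
    by (rule has_vector_derivative_real_field)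
  moreover have eq2: "(\<lambda>y. ?h (of_real y)) = EE k \<xi>"
    by (auto simp: EE_def)
  moreover have eq3: "?h (of_real y) * (\<i> * (of_nat (2*k) * (of_real y)^(2*k-1) - of_real \<xi>))
      = \<i> * complex_of_real (real (2*k) * y^(2*k-1) - \<xi>) * EE k \<xi> y"
    by (simp add: EE_def)
  ultimately show ?thesis by metis
qed

lemma win_shift_deriv:
  assumes "schwartz f"
  shows "((\<lambda>y. win f j n (y - x)) has_vector_derivative (of_nat j * win f (j-1) n (y - x) + win f j (Suc n) (y - x))) (at y)"
proof -
  have "((\<lambda>y. y - x) has_vector_derivative 1) (at y)"
    by (rule derivative_eq_intros refl | simp)+
  from vector_diff_chain_at[OF this win_deriv[OF assms, of j n "y - x" UNIV]]
  show ?thesis by (simp add: o_def)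
qed

definition cc :: "nat \<Rightarrow> nat \<Rightarrow> real \<Rightarrow> real" where
  "cc k m x = real (2*k) * real ((2*k-1) choose m) * x^(2*k-1-m)"

lemma win_mult_pow: "complex_of_real (t^m) * win f j n t = win f (j+m) n t"
  by (simp add: win_def power_add)

lemma binom_expand:
  "real (2*k) * y^(2*k-1) = (\<Sum>m\<le>2*k-1. cc k m x * (y - x)^m)"
proof -
  have "y^(2*k-1) = ((y - x) + x)^(2*k-1)" by simp
  also have "\<dots> = (\<Sum>m\<le>2*k-1. real ((2*k-1) choose m) * (y - x)^m * x^(2*k-1-m))"
    by (rule binomial_ring)
  finally show ?thesis
    by (simp add: cc_def sum_distrib_left mult_ac)
qed

lemma Ig_rec:
  assumes "schwartz f"
  shows "of_nat j * Ig f k (j-1) n x \<xi> + Ig f k j (Suc n) x \<xi>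
     + \<i> * (\<Sum>m\<le>2*k-1. of_real (cc k m x) * Ig f k (j+m) n x \<xi>)
     - \<i> * of_real \<xi> * Ig f k j n x \<xi> = 0"
proof -
  define F where "F y = EE k \<xi> y * win f j n (y - x)" for y
  define Fd where "Fd y = EE k \<xi> y * (of_nat j * win f (j-1) n (y - x) + win f j (Suc n) (y - x))
     + (\<i> * complex_of_real (real (2*k) * y^(2*k-1) - \<xi>) * EE k \<xi> y) * win f j n (y - x)" for y
  define G where "G y = of_nat j * (EE k \<xi> y * win f (j-1) n (y - x)) + EE k \<xi> y * win f j (Suc n) (y - x)
     + \<i> * (\<Sum>m\<le>2*k-1. of_real (cc k m x) * (EE k \<xi> y * win f (j+m) n (y - x)))
     - \<i> * of_real \<xi> * (EE k \<xi> y * win f j n (y - x))" for y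
  have FG: "Fd y = G y" for y
  proof -
    have e1: "complex_of_real (real (2*k) * y^(2*k-1)) * win f j n (y - x)
        = (\<Sum>m\<le>2*k-1. of_real (cc k m x) * win f (j+m) n (y - x))"
      unfolding binom_expand[of k y x] of_real_sum sum_distrib_right
      by (intro sum.cong refl) (simp add: win_mult_pow[symmetric] mult_ac)
    have e2: "\<i> * (\<Sum>m\<le>2*k-1. of_real (cc k m x) * (EE k \<xi> y * win f (j+m) n (y - x)))
       = \<i> * EE k \<xi> y * (\<Sum>m\<le>2*k-1. of_real (cc k m x) * win f (j+m) n (y - x))"
      by (simp add: sum_distrib_left mult_ac)
    have "Fd y = of_nat j * (EE k \<xi> y * win f (j-1) n (y - x)) + EE k \<xi> y * win f j (Suc n) (y - x)
       + \<i> * EE k \<xi> y * (complex_of_real (real (2*k) * y^(2*k-1)) * win f j n (y - x))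
       - \<i> * of_real \<xi> * (EE k \<xi> y * win f j n (y - x))"
      unfolding Fd_def of_real_diff by (simp add: algebra_simps)
    also have "\<dots> = G y" unfolding G_def e1 e2 ..
    finally show ?thesis .
  qed
  have der: "(F has_vector_derivative Fd y) (at y)" for y
    unfolding F_def Fd_def
    by (rule has_vector_derivative_mult[OF EE_deriv win_shift_deriv[OF assms], THEN has_vector_derivative_eq_rhs]) 
       (simp add: algebra_simps)
  have cont: "continuous_on UNIV Fd"
    unfolding Fd_def
    by (intro continuous_intros EE_cont continuous_on_compose2[OF win_cont[OF assms]]) auto
  have intG: "integrable lborel G"
    unfolding G_def
    by (intro Bochner_Integration.integrable_diff Bochner_Integration.integrable_add Bochner_Integration.integrable_mult_right Bochner_Integration.integrable_sum integrable_Ig assms)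
  have int: "integrable lborel Fd"
    using intG FG by (metis ext)
  obtain C where C: "\<forall>t. norm (win f j n t) \<le> C * inverse (1 + t\<^sup>2)" using win_bound[OF assms] by blast
  have nF: "norm (F y) \<le> C * inverse (1 + (y - x)\<^sup>2)" for y
    using C by (simp add: F_def norm_mult)
  have top: "(F \<longlongrightarrow> 0) at_top"
    by (rule Lim_null_comparison[OF always_eventually[OF allI[OF nF]]]) real_asymp
  have bot: "(F \<longlongrightarrow> 0) at_bot"
    by (rule Lim_null_comparison[OF always_eventually[OF allI[OF nF]]]) real_asymp
  have "integral\<^sup>L lborel Fd = 0"
    by (rule integral_deriv_zero[OF der cont int top bot])
  hence "integral\<^sup>L lborel G = 0" using FG by (metis ext)
  moreover have "integral\<^sup>L lborel G = of_nat j * Ig f k (j-1) n x \<xi> + Ig f k j (Suc n) x \<xi>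
     + \<i> * (\<Sum>m\<le>2*k-1. of_real (cc k m x) * Ig f k (j+m) n x \<xi>)
     - \<i> * of_real \<xi> * Ig f k j n x \<xi>"
    unfolding G_def Ig_def
    by (subst Bochner_Integration.integral_diff Bochner_Integration.integral_add Bochner_Integration.integral_mult_right Bochner_Integration.integral_sum
        | intro Bochner_Integration.integrable_diff Bochner_Integration.integrable_add Bochner_Integration.integrable_mult_right Bochner_Integration.integrable_sum integrable_Ig assms)+ (simp add: Bochner_Integration.integral_sum integrable_Ig assms)
  ultimately show ?thesis by simp
qed


lemma lin_aux:
  fixes A B S I c e :: complex
  assumes "A + B + \<i> * (c * I + S) - \<i> * e * I = 0"
  shows "\<i> * (c - e) * I = - (A + B + \<i> * S)"
proof -
  have "\<i> * (c - e) * I + (A + B + \<i> * S) = 0" using assms by (simp add: algebra_simps)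
  thus ?thesis by (metis eq_neg_iff_add_eq_0)
qed

lemma Ig_ineq:
  assumes "schwartz f" "k \<ge> 1"
  shows "\<bar>real (2*k) * x^(2*k-1) - \<xi>\<bar> * norm (Ig f k j n x \<xi>) \<le> real j * norm (Ig f k (j-1) n x \<xi>)
     + norm (Ig f k j (Suc n) x \<xi>) + (\<Sum>i\<le>2*k-2. \<bar>cc k (Suc i) x\<bar> * norm (Ig f k (j + Suc i) n x \<xi>))"
proof -
  have e: "2*k-1 = Suc (2*k-2)" using assms by simp
  have s: "(\<Sum>m\<le>2*k-1. of_real (cc k m x) * Ig f k (j+m) n x \<xi>) = of_real (cc k 0 x) * Ig f k j n x \<xi>
      + (\<Sum>i\<le>2*k-2. of_real (cc k (Suc i) x) * Ig f k (j + Suc i) n x \<xi>)"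
    unfolding e by (subst sum.atMost_Suc_shift) simp
  have c0: "cc k 0 x = real (2*k) * x^(2*k-1)" by (simp add: cc_def)
  define S where "S = (\<Sum>i\<le>2*k-2. of_real (cc k (Suc i) x) * Ig f k (j + Suc i) n x \<xi>)"
  have "\<i> * (of_real (cc k 0 x) - of_real \<xi>) * Ig f k j n x \<xi>
      = - (of_nat j * Ig f k (j-1) n x \<xi> + Ig f k j (Suc n) x \<xi> + \<i> * S)"
    by (rule lin_aux[OF Ig_rec[OF assms(1), of j k n x \<xi>, unfolded s, folded S_def]])
  hence "norm (\<i> * (of_real (cc k 0 x) - of_real \<xi>) * Ig f k j n x \<xi>)
      = norm (of_nat j * Ig f k (j-1) n x \<xi> + Ig f k j (Suc n) x \<xi> + \<i> * S)"
    by (metis norm_minus_cancel)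
  moreover have "norm (\<i> * (of_real (cc k 0 x) - of_real \<xi>) * Ig f k j n x \<xi>)
      = \<bar>real (2*k) * x^(2*k-1) - \<xi>\<bar> * norm (Ig f k j n x \<xi>)"
    unfolding c0[symmetric] by (simp only: of_real_diff[symmetric] norm_mult norm_ii norm_of_real mult_1)
  moreover have "norm (of_nat j * Ig f k (j-1) n x \<xi> + Ig f k j (Suc n) x \<xi> + \<i> * S)
      \<le> real j * norm (Ig f k (j-1) n x \<xi>) + norm (Ig f k j (Suc n) x \<xi>) + norm S"
  proof -
    have "norm (of_nat j * Ig f k (j-1) n x \<xi> + Ig f k j (Suc n) x \<xi> + \<i> * S)
      \<le> norm (of_nat j * Ig f k (j-1) n x \<xi> + Ig f k j (Suc n) x \<xi>) + norm (\<i> * S)"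
      by (rule norm_triangle_ineq)
    also have "\<dots> \<le> norm (of_nat j * Ig f k (j-1) n x \<xi>) + norm (Ig f k j (Suc n) x \<xi>) + norm (\<i> * S)"
      using norm_triangle_ineq by simp
    finally show ?thesis by (simp add: norm_mult)
  qed
  moreover have "norm S \<le> (\<Sum>i\<le>2*k-2. \<bar>cc k (Suc i) x\<bar> * norm (Ig f k (j + Suc i) n x \<xi>))"
    unfolding S_def by (rule order_trans[OF norm_sum]) (simp add: norm_mult)
  ultimately show ?thesis by linarith
qed

definition Kc :: "nat \<Rightarrow> real" where
  "Kc k = (\<Sum>i\<le>2*k-2. real (2*k) * real ((2*k-1) choose (Suc i)))"

lemma cc_bound:
  assumes "1 \<le> \<bar>x\<bar>" "i \<le> 2*k-2"
  shows "\<bar>cc k (Suc i) x\<bar> \<le> real (2*k) * real ((2*k-1) choose (Suc i)) * \<bar>x\<bar>^(2*k-2)"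
proof -
  have "\<bar>x\<bar>^(2*k-1-Suc i) \<le> \<bar>x\<bar>^(2*k-2)"
    using assms by (intro power_increasing) auto
  thus ?thesis unfolding cc_def
    by (simp add: abs_mult power_abs mult_left_mono)
qed

lemma KEY:
  assumes "schwartz f" "k \<ge> 1"
  shows "\<exists>C R. R \<ge> 1 \<and> (\<forall>j\<le>J. \<forall>n\<le>J. \<forall>x \<xi>. R \<le> \<bar>x\<bar> \<longrightarrow>
     real k * \<bar>x\<bar>^(2*k-1) \<le> \<bar>real (2*k) * x^(2*k-1) - \<xi>\<bar> \<longrightarrow> norm (Ig f k j n x \<xi>) \<le> C / \<bar>x\<bar>^N)"
proof (induction N arbitrary: J)
  case 0
  have "\<forall>j n. \<exists>C. \<forall>x \<xi>. norm (Ig f k j n x \<xi>) \<le> C" using Ig_base[OF assms(1)] by blast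
  then obtain Cf where Cf: "\<And>j n x \<xi>. norm (Ig f k j n x \<xi>) \<le> Cf j n" by metis
  show ?case
  proof (rule exI, rule exI[of _ 1], intro conjI allI impI)
    fix j n x \<xi> assume "j \<le> J" "n \<le> J"
    have "norm (Ig f k j n x \<xi>) \<le> Cf j n" by (rule Cf)
    also have "\<dots> \<le> (\<Sum>j'\<le>J. \<Sum>n'\<le>J. \<bar>Cf j' n'\<bar>)"
    proof -
      have "Cf j n \<le> \<bar>Cf j n\<bar>" by simp
      also have "\<dots> \<le> (\<Sum>n'\<le>J. \<bar>Cf j n'\<bar>)"
        using \<open>n \<le> J\<close> by (intro member_le_sum) auto
      also have "\<dots> \<le> (\<Sum>j'\<le>J. \<Sum>n'\<le>J. \<bar>Cf j' n'\<bar>)"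
        using \<open>j \<le> J\<close> by (intro member_le_sum[where f="\<lambda>j'. \<Sum>n'\<le>J. \<bar>Cf j' n'\<bar>"] sum_nonneg) auto
      finally show ?thesis .
    qed
    finally show "norm (Ig f k j n x \<xi>) \<le> (\<Sum>j'\<le>J. \<Sum>n'\<le>J. \<bar>Cf j' n'\<bar>) / \<bar>x\<bar>^0" by simp
  qed simp
next
  case (Suc N)
  obtain C0 R0 where R0: "R0 \<ge> 1" and IH: "\<And>j n x \<xi>. j \<le> J + 2*k \<Longrightarrow> n \<le> J + 2*k \<Longrightarrow> R0 \<le> \<bar>x\<bar> \<Longrightarrow>
     real k * \<bar>x\<bar>^(2*k-1) \<le> \<bar>real (2*k) * x^(2*k-1) - \<xi>\<bar> \<Longrightarrow> norm (Ig f k j n x \<xi>) \<le> C0 / \<bar>x\<bar>^N"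
    using Suc.IH[of "J + 2*k"] by blast
  have C0: "C0 \<ge> 0"
  proof -
    have "norm (Ig f k 0 0 R0 0) \<le> C0 / \<bar>R0\<bar>^N"
      using IH[of 0 0 R0 0] R0 assms(2) by (simp add: abs_mult)
    moreover have "0 < \<bar>R0\<bar>^N" using R0 by simp
    ultimately show ?thesis by (smt (verit) divide_neg_pos norm_ge_zero)
  qed
  define C where "C = (real J + 1 + Kc k) * C0 / real k"
  show ?case
  proof (intro exI conjI allI impI)
    show "R0 \<ge> 1" by (rule R0)
    fix j n x \<xi>
    assume j: "j \<le> J" and n: "n \<le> J" and x: "R0 \<le> \<bar>x\<bar>" and D: "real k * \<bar>x\<bar>^(2*k-1) \<le> \<bar>real (2*k) * x^(2*k-1) - \<xi>\<bar>"
    have x1: "1 \<le> \<bar>x\<bar>" using R0 x by simp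
    have xN: "0 < \<bar>x\<bar>^N" using x1 by simp
    have t1: "norm (Ig f k (j-1) n x \<xi>) \<le> C0 / \<bar>x\<bar>^N" using IH[of "j-1" n x \<xi>] j n x D by simp
    have t2: "norm (Ig f k j (Suc n) x \<xi>) \<le> C0 / \<bar>x\<bar>^N" using IH[of j "Suc n" x \<xi>] j n x D assms(2) by simp
    have t3: "\<bar>cc k (Suc i) x\<bar> * norm (Ig f k (j + Suc i) n x \<xi>)
        \<le> real (2*k) * real ((2*k-1) choose (Suc i)) * \<bar>x\<bar>^(2*k-2) * (C0 / \<bar>x\<bar>^N)" if "i \<in> {..2*k-2}" for i
    proof (rule mult_mono)
      show "\<bar>cc k (Suc i) x\<bar> \<le> real (2*k) * real ((2*k-1) choose (Suc i)) * \<bar>x\<bar>^(2*k-2)"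
        using cc_bound[OF x1] that by simp
      show "norm (Ig f k (j + Suc i) n x \<xi>) \<le> C0 / \<bar>x\<bar>^N"
        using IH[of "j + Suc i" n x \<xi>] j n x D that assms(2) by simp
    qed auto
    have pk: "1 \<le> \<bar>x\<bar>^(2*k-2)" using x1 by (simp add: one_le_power)
    have "real k * \<bar>x\<bar>^(2*k-1) * norm (Ig f k j n x \<xi>)
        \<le> \<bar>real (2*k) * x^(2*k-1) - \<xi>\<bar> * norm (Ig f k j n x \<xi>)"
      using D by (rule mult_right_mono) simp
    also have "\<dots> \<le> real j * norm (Ig f k (j-1) n x \<xi>) + norm (Ig f k j (Suc n) x \<xi>)
        + (\<Sum>i\<le>2*k-2. \<bar>cc k (Suc i) x\<bar> * norm (Ig f k (j + Suc i) n x \<xi>))"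
      by (rule Ig_ineq[OF assms])
    also have "\<dots> \<le> real J * (C0 / \<bar>x\<bar>^N) + C0 / \<bar>x\<bar>^N
        + (\<Sum>i\<le>2*k-2. real (2*k) * real ((2*k-1) choose (Suc i)) * \<bar>x\<bar>^(2*k-2) * (C0 / \<bar>x\<bar>^N))"
    proof (intro add_mono sum_mono t3 t2)
      show "real j * norm (Ig f k (j-1) n x \<xi>) \<le> real J * (C0 / \<bar>x\<bar>^N)"
        using j t1 C0 xN by (intro mult_mono) auto
    qed auto
    also have "\<dots> = (real J + 1 + Kc k * \<bar>x\<bar>^(2*k-2)) * (C0 / \<bar>x\<bar>^N)"
    proof -
      have sd: "(\<Sum>i\<le>2*k-2. real (2*k) * real ((2*k-1) choose (Suc i)) * \<bar>x\<bar>^(2*k-2) * (C0 / \<bar>x\<bar>^N))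
          = Kc k * \<bar>x\<bar>^(2*k-2) * (C0 / \<bar>x\<bar>^N)"
        unfolding Kc_def by (simp only: sum_distrib_right)
      show ?thesis unfolding sd by (simp add: algebra_simps)
    qed
    also have "\<dots> \<le> (real J + 1 + Kc k) * \<bar>x\<bar>^(2*k-2) * (C0 / \<bar>x\<bar>^N)"
    proof -
      have "Kc k \<ge> 0" unfolding Kc_def by (intro sum_nonneg) auto
      have a: "(real J + 1) \<le> (real J + 1) * \<bar>x\<bar>^(2*k-2)"
        using mult_left_mono[OF pk, of "real J + 1"] by simp
      have b: "(real J + 1 + Kc k) * \<bar>x\<bar>^(2*k-2) = (real J + 1) * \<bar>x\<bar>^(2*k-2) + Kc k * \<bar>x\<bar>^(2*k-2)"
        by (simp add: algebra_simps)
      have "real J + 1 + Kc k * \<bar>x\<bar>^(2*k-2) \<le> (real J + 1 + Kc k) * \<bar>x\<bar>^(2*k-2)"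
        using a b by linarith
      thus ?thesis using C0 xN by (intro mult_right_mono) auto
    qed
    finally have main: "real k * \<bar>x\<bar>^(2*k-1) * norm (Ig f k j n x \<xi>)
        \<le> (real J + 1 + Kc k) * \<bar>x\<bar>^(2*k-2) * (C0 / \<bar>x\<bar>^N)" .
    have e21: "2*k-1 = Suc (2*k-2)" using assms(2) by simp
    have ex: "\<bar>x\<bar>^(2*k-1) = \<bar>x\<bar> * \<bar>x\<bar>^(2*k-2)"
      by (simp only: e21 power_Suc)
    have pos: "0 < real k * \<bar>x\<bar>^(2*k-2) * \<bar>x\<bar>^Suc N"
      using assms(2) x1 by (intro mult_pos_pos) auto
    have "(norm (Ig f k j n x \<xi>) * \<bar>x\<bar>^Suc N) * (real k * \<bar>x\<bar>^(2*k-2))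
        = (real k * \<bar>x\<bar>^(2*k-1) * norm (Ig f k j n x \<xi>)) * \<bar>x\<bar>^N"
      unfolding ex power_Suc by (simp only: mult_ac)
    also have "\<dots> \<le> (real J + 1 + Kc k) * \<bar>x\<bar>^(2*k-2) * (C0 / \<bar>x\<bar>^N) * \<bar>x\<bar>^N"
      using main xN by (intro mult_right_mono) auto
    also have "\<dots> = C * (real k * \<bar>x\<bar>^(2*k-2))"
      using xN assms(2) by (simp add: C_def field_simps)
    finally have "(norm (Ig f k j n x \<xi>) * \<bar>x\<bar>^Suc N) * (real k * \<bar>x\<bar>^(2*k-2)) \<le> C * (real k * \<bar>x\<bar>^(2*k-2))" .
    moreover have kp: "0 < real k * \<bar>x\<bar>^(2*k-2)" using assms(2) x1 by (intro mult_pos_pos) auto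
    ultimately have "norm (Ig f k j n x \<xi>) * \<bar>x\<bar>^Suc N \<le> C" by (rule mult_right_le_imp_le)
    moreover have "0 < \<bar>x\<bar>^Suc N" using x1 by simp
    ultimately show "norm (Ig f k j n x \<xi>) \<le> C / \<bar>x\<bar>^Suc N"
      by (simp add: pos_le_divide_eq)
  qed
qed




lemma stft_Ig:
  assumes "\<And>y. u y = exp (\<i> * complex_of_real (y ^ (2 * k)))"
  shows "stft f u z = Ig f k 0 0 (fst z) (snd z)"
proof -
  have "u y * cnj (f (y - fst z)) * exp (- \<i> * complex_of_real (y * snd z))
      = EE k (snd z) y * win f 0 0 (y - fst z)" for y
    by (simp add: assms EE_def win_def nd_0 exp_diff exp_minus right_diff_distrib divide_inverse mult_ac)
  thus ?thesis unfolding stft_def Ig_def by simp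
qed

definition sw :: "real \<times> real \<Rightarrow> real" where "sw z = sqrt (1 + (norm z)\<^sup>2)"

lemma sw_ge1: "1 \<le> sw z" unfolding sw_def by simp

lemma sw_le: "sw z \<le> 1 + \<bar>fst z\<bar> + \<bar>snd z\<bar>"
proof -
  have "(norm z)\<^sup>2 = (fst z)\<^sup>2 + (snd z)\<^sup>2"
    by (cases z) (simp add: norm_Pair)
  hence "1 + (norm z)\<^sup>2 \<le> (1 + \<bar>fst z\<bar> + \<bar>snd z\<bar>)\<^sup>2"
    by (simp add: power2_eq_square algebra_simps)
  hence "sw z \<le> sqrt ((1 + \<bar>fst z\<bar> + \<bar>snd z\<bar>)\<^sup>2)" unfolding sw_def by (rule real_sqrt_le_mono)
  thus ?thesis by simp
qed

lemma sw_ge_fst: "\<bar>fst z\<bar> \<le> sw z"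
proof -
  have "(norm z)\<^sup>2 = (fst z)\<^sup>2 + (snd z)\<^sup>2"
    by (cases z) (simp add: norm_Pair)
  hence "(fst z)\<^sup>2 \<le> 1 + (norm z)\<^sup>2" by simp
  hence "sqrt ((fst z)\<^sup>2) \<le> sw z" unfolding sw_def by (rule real_sqrt_le_mono)
  thus ?thesis by simp
qed

lemma sw_powr_le: "0 \<le> N \<Longrightarrow> sw z powr N \<le> sw z ^ nat \<lceil>N\<rceil>"
proof -
  assume N: "0 \<le> N"
  have "sw z powr N \<le> sw z powr (real (nat \<lceil>N\<rceil>))"
    using sw_ge1[of z] N by (intro powr_mono) auto
  also have "\<dots> = sw z ^ nat \<lceil>N\<rceil>" using sw_ge1[of z] by (simp add: powr_realpow)
  finally show ?thesis .
qed

lemma odd_pow_abs: "\<bar>x^(2*k-1)\<bar> = \<bar>x::real\<bar>^(2*k-1)" by (simp add: power_abs)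

lemma dirA:
  assumes k: "k \<ge> 2" and u: "\<And>y. u y = exp (\<i> * complex_of_real (y ^ (2 * k)))"
    and f: "schwartz f" and x0: "x0 \<noteq> 0"
  shows "(x0, \<xi>0) \<notin> gabor_WF f u"
proof -
  define L where "L = \<bar>\<xi>0\<bar> / \<bar>x0\<bar> + 1"
  have L1: "L \<ge> 1" unfolding L_def using x0 by simp
  define \<Gamma> where "\<Gamma> = {z::real\<times>real. 0 < x0 * fst z \<and> \<bar>snd z\<bar> < L * \<bar>fst z\<bar>}"
  have op: "open \<Gamma>" unfolding \<Gamma>_def
    by (intro open_Collect_conj open_Collect_less continuous_intros)
  have co: "conic \<Gamma>" unfolding conic_def \<Gamma>_def
  proof (intro ballI allI impI, clarsimp)
    fix a b t :: real assume "0 < x0 * a" "\<bar>b\<bar> < L * \<bar>a\<bar>" "0 < t"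
    thus "0 < x0 * (t * a) \<and> \<bar>t * b\<bar> < L * \<bar>t * a\<bar>"
      by (simp add: abs_mult mult.left_commute[of x0])
  qed
  have mem: "(x0, \<xi>0) \<in> \<Gamma>" unfolding \<Gamma>_def L_def using x0
    by (simp add: distrib_right) (metis not_real_square_gt_zero)
  have bnd: "\<exists>C. \<forall>z\<in>\<Gamma>. sqrt (1 + (norm z)\<^sup>2) powr N * norm (stft f u z) \<le> C" if N: "N \<ge> 0" for N
  proof -
    define M where "M = nat \<lceil>N\<rceil>"
    obtain C1 R1 where R1: "R1 \<ge> 1" and C1: "\<And>x \<xi>. R1 \<le> \<bar>x\<bar> \<Longrightarrow>
        real k * \<bar>x\<bar>^(2*k-1) \<le> \<bar>real (2*k) * x^(2*k-1) - \<xi>\<bar> \<Longrightarrow> norm (Ig f k 0 0 x \<xi>) \<le> C1 / \<bar>x\<bar>^M"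
      using KEY[OF f, of k 0 M] k by auto
    obtain B0 where B0: "\<And>x \<xi>. norm (Ig f k 0 0 x \<xi>) \<le> B0" using Ig_base[OF f, of k 0 0] by blast
    define R where "R = max R1 L"
    show ?thesis
    proof (intro exI ballI)
      fix z assume zG: "z \<in> \<Gamma>"
      obtain x \<xi> where z: "z = (x, \<xi>)" by (cases z)
      have xi: "\<bar>\<xi>\<bar> < L * \<bar>x\<bar>" using zG z \<Gamma>_def by simp
      have V: "stft f u z = Ig f k 0 0 x \<xi>" using stft_Ig[OF u] z by simp
      have pw: "sqrt (1 + (norm z)\<^sup>2) powr N * norm (stft f u z) \<le> sw z ^ M * norm (Ig f k 0 0 x \<xi>)"
        using sw_powr_le[OF N, of z] by (simp add: V sw_def M_def mult_right_mono)
      show "sqrt (1 + (norm z)\<^sup>2) powr N * norm (stft f u z)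
         \<le> max ((2 + L)^M * C1) ((1 + R + L * R)^M * B0)"
      proof (cases "R \<le> \<bar>x\<bar>")
        case True
        have x1: "1 \<le> \<bar>x\<bar>" and xL: "L \<le> \<bar>x\<bar>" and xR1: "R1 \<le> \<bar>x\<bar>" using True R1 L1 by (auto simp: R_def)
        have D: "real k * \<bar>x\<bar>^(2*k-1) \<le> \<bar>real (2*k) * x^(2*k-1) - \<xi>\<bar>"
        proof -
          have "L * \<bar>x\<bar> \<le> \<bar>x\<bar> * \<bar>x\<bar>" using mult_right_mono[OF xL, of "\<bar>x\<bar>"] by simp
          also have "\<dots> = \<bar>x\<bar>^2" by (simp add: power2_eq_square)
          also have "\<dots> \<le> \<bar>x\<bar>^(2*k-1)" using x1 k by (intro power_increasing) auto
          also have "\<dots> \<le> real k * \<bar>x\<bar>^(2*k-1)" using k x1 by (simp add: mult_le_cancel_right1)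
          finally have a: "L * \<bar>x\<bar> \<le> real k * \<bar>x\<bar>^(2*k-1)" .
          have "real (2*k) * \<bar>x\<bar>^(2*k-1) - \<bar>\<xi>\<bar> \<le> \<bar>real (2*k) * x^(2*k-1) - \<xi>\<bar>"
            using abs_triangle_ineq2[of "real (2*k) * x^(2*k-1)" \<xi>] by (simp add: abs_mult power_abs)
          thus ?thesis using a xi by simp
        qed
        have n: "norm (Ig f k 0 0 x \<xi>) \<le> C1 / \<bar>x\<bar>^M" by (rule C1[OF xR1 D])
        have s: "sw z \<le> (2 + L) * \<bar>x\<bar>"
          using sw_le[of z] z xi x1 by (simp add: algebra_simps)
        have "sw z ^ M * norm (Ig f k 0 0 x \<xi>) \<le> ((2 + L) * \<bar>x\<bar>)^M * (C1 / \<bar>x\<bar>^M)"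
          using L1 by (intro mult_mono power_mono n s) (auto intro: order_trans[OF zero_le_one sw_ge1])
        also have "\<dots> = (2 + L)^M * C1" using x1 by (auto simp: power_mult_distrib)
        finally show ?thesis using pw by linarith
      next
        case False
        have s: "sw z \<le> 1 + R + L * R"
        proof -
          have "\<bar>\<xi>\<bar> \<le> L * R" using xi False L1
            by (smt (verit) mult_left_mono)
          thus ?thesis using sw_le[of z] z False by simp
        qed
        have B0p: "0 \<le> B0" using B0[of 0 0] norm_ge_zero order_trans by blast
        have "sw z ^ M * norm (Ig f k 0 0 x \<xi>) \<le> (1 + R + L * R)^M * B0"
        proof (intro mult_mono power_mono s B0)
          have "1 \<le> R" unfolding R_def using R1 by simp
          hence "0 \<le> L * R" using L1 by simp
          thus "0 \<le> (1 + R + L * R) ^ M" using \<open>1 \<le> R\<close> by simp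
        qed (auto intro: order_trans[OF zero_le_one sw_ge1] B0p)
        thus ?thesis using pw by linarith
      qed
    qed
  qed
  show ?thesis
    unfolding gabor_WF_def using op co mem bnd by blast
qed




abbreviation "nu \<equiv> std_normal_density"

lemma nu_cont: "continuous_on S nu"
  unfolding normal_density_def by (intro continuous_intros) auto

lemma gauss_char: "(\<integral>s. nu s *\<^sub>R iexp (t * s) \<partial>lborel) = complex_of_real (exp (-(t\<^sup>2)/2))"
proof -
  have "char std_normal_distribution t = complex_of_real (exp (-(t\<^sup>2)/2))"
    by (simp add: char_std_normal_distribution)
  moreover have "char std_normal_distribution t = (\<integral>s. nu s *\<^sub>R iexp (t * s) \<partial>lborel)"
    unfolding char_def by (subst integral_density) (auto intro!: borel_measurable_continuous_onI continuous_intros)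
  ultimately show ?thesis by simp
qed

lemma nu_int1: "(\<integral>s. nu s \<partial>lborel) = 1"
  using integral_std_normal_moment_even[of 0] by simp

lemma nu_integrable: "integrable lborel nu"
  using integrable_std_normal_moment[of 0] by simp

lemma nu_abs_integrable: "integrable lborel (\<lambda>s. nu s * \<bar>s\<bar>)"
  using integrable_std_normal_moment_abs[of 1] by simp

lemma nu_int_abs: "(\<integral>s. nu s * \<bar>s\<bar> \<partial>lborel) = sqrt (2/pi)"
  using integral_std_normal_moment_abs_odd[of 0] by simp

lemma nu_affine:
  assumes "\<sigma> > 0"
  shows "integrable lborel (\<lambda>y. nu ((y0 - y) / \<sigma>))" "(\<integral>y. nu ((y0 - y) / \<sigma>) \<partial>lborel) = \<sigma>"
proof -
  have e: "(\<lambda>s. nu ((y0 - (y0 + (-\<sigma>) * s)) / \<sigma>)) = nu"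
    using assms by auto
  show "integrable lborel (\<lambda>y. nu ((y0 - y) / \<sigma>))"
    using lborel_integrable_real_affine_iff[of "-\<sigma>" "\<lambda>y. nu ((y0 - y) / \<sigma>)" y0] assms e nu_integrable by simp
  have "(\<integral>y. nu ((y0 - y) / \<sigma>) \<partial>lborel) = \<bar>-\<sigma>\<bar> *\<^sub>R (\<integral>s. nu ((y0 - (y0 + (-\<sigma>) * s)) / \<sigma>) \<partial>lborel)"
    by (rule lborel_integral_real_affine) (use assms in simp)
  thus "(\<integral>y. nu ((y0 - y) / \<sigma>) \<partial>lborel) = \<sigma>"
    unfolding e nu_int1 using assms by simp
qed

lemma nu_affine_abs:
  assumes "\<sigma> > 0"
  shows "integrable lborel (\<lambda>y. nu ((y0 - y) / \<sigma>) * \<bar>y - y0\<bar>)"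
    "(\<integral>y. nu ((y0 - y) / \<sigma>) * \<bar>y - y0\<bar> \<partial>lborel) = \<sigma>\<^sup>2 * sqrt (2/pi)"
proof -
  have e: "(\<lambda>s. nu ((y0 - (y0 + (-\<sigma>) * s)) / \<sigma>) * \<bar>(y0 + (-\<sigma>) * s) - y0\<bar>) = (\<lambda>s. \<sigma> * (nu s * \<bar>s\<bar>))"
    using assms by (auto simp: abs_mult)
  have i: "integrable lborel (\<lambda>s. \<sigma> * (nu s * \<bar>s\<bar>))"
    using nu_abs_integrable by simp
  show "integrable lborel (\<lambda>y. nu ((y0 - y) / \<sigma>) * \<bar>y - y0\<bar>)"
    using lborel_integrable_real_affine_iff[of "-\<sigma>" "\<lambda>y. nu ((y0 - y) / \<sigma>) * \<bar>y - y0\<bar>" y0] assms e i by simp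
  have "(\<integral>y. nu ((y0 - y) / \<sigma>) * \<bar>y - y0\<bar> \<partial>lborel)
     = \<bar>-\<sigma>\<bar> *\<^sub>R (\<integral>s. nu ((y0 - (y0 + (-\<sigma>) * s)) / \<sigma>) * \<bar>(y0 + (-\<sigma>) * s) - y0\<bar> \<partial>lborel)"
    by (rule lborel_integral_real_affine) (use assms in simp)
  thus "(\<integral>y. nu ((y0 - y) / \<sigma>) * \<bar>y - y0\<bar> \<partial>lborel) = \<sigma>\<^sup>2 * sqrt (2/pi)"
    unfolding e using assms by (simp add: nu_int_abs power2_eq_square)
qed


lemma inv_bound:
  fixes g :: "real \<Rightarrow> complex"
  assumes gc: "continuous_on UNIV g" and gi: "integrable lborel g"
    and lip: "\<And>a b. norm (g a - g b) \<le> \<Lambda> * \<bar>a - b\<bar>" and \<Lambda>: "\<Lambda> \<ge> 0"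
    and V: "\<And>\<xi>. norm (\<integral>y. g y * exp (- \<i> * complex_of_real (y * \<xi>)) \<partial>lborel) \<le> B"
    and \<sigma>: "\<sigma> > 0"
  shows "norm (g y0) * \<sigma> \<le> B + \<Lambda> * \<sigma>\<^sup>2"
proof -
  have gm[measurable]: "g \<in> borel_measurable borel" using gc by (rule borel_measurable_continuous_onI)
  have B0: "0 \<le> B" using V[of 0] norm_ge_zero order_trans by blast
  define H where "H s y = nu s *\<^sub>R (g y * iexp ((y0 - y) * s / \<sigma>))" for s y
  have Hm: "(\<lambda>(s,y). H s y) \<in> borel_measurable (lborel \<Otimes>\<^sub>M lborel)"
    unfolding H_def by measurable
  have nH: "norm (H s y) = nu s * norm (g y)" for s y
    unfolding H_def by (simp add: norm_mult)
  have intHs: "integrable lborel (\<lambda>y. H s y)" for s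
  proof (rule Bochner_Integration.integrable_bound[where f="\<lambda>y. nu s * norm (g y)"])
    show "integrable lborel (\<lambda>y. nu s * norm (g y))" using gi by simp
    show "(\<lambda>y. H s y) \<in> borel_measurable lborel" unfolding H_def by measurable
    show "AE y in lborel. norm (H s y) \<le> norm (nu s * norm (g y))" by (simp add: nH)
  qed
  have Hint: "integrable (lborel \<Otimes>\<^sub>M lborel) (\<lambda>(s,y). H s y)"
  proof (rule lborel_pair.Fubini_integrable)
    show "(\<lambda>(s,y). H s y) \<in> borel_measurable (lborel \<Otimes>\<^sub>M lborel)" by (rule Hm)
    have "(\<lambda>s. \<integral>y. norm ((\<lambda>(s,y). H s y) (s, y)) \<partial>lborel) = (\<lambda>s. nu s * (\<integral>y. norm (g y) \<partial>lborel))"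
      by (simp add: nH)
    thus "integrable lborel (\<lambda>s. \<integral>y. norm ((\<lambda>(s,y). H s y) (s, y)) \<partial>lborel)"
      using nu_integrable by simp
    show "AE s in lborel. integrable lborel (\<lambda>y. (\<lambda>(s,y). H s y) (s, y))"
      using intHs by simp
  qed
  have Fub: "(\<integral>y. (\<integral>s. H s y \<partial>lborel) \<partial>lborel) = (\<integral>s. (\<integral>y. H s y \<partial>lborel) \<partial>lborel)"
    by (rule lborel_pair.Fubini_integral) (use Hint in simp)
  have inner_y: "(\<integral>y. H s y \<partial>lborel) = nu s *\<^sub>R (iexp (y0 * s / \<sigma>) * (\<integral>y. g y * exp (- \<i> * complex_of_real (y * (s/\<sigma>))) \<partial>lborel))" for s
  proof -
    have "H s y = nu s *\<^sub>R (iexp (y0 * s / \<sigma>) * (g y * exp (- \<i> * complex_of_real (y * (s/\<sigma>)))))" for y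
    proof -
      have "iexp ((y0 - y) * s / \<sigma>) = iexp (y0 * s / \<sigma>) * exp (- \<i> * complex_of_real (y * (s/\<sigma>)))"
      proof -
        have r: "(y0 - y) * s / \<sigma> = y0 * s / \<sigma> - y * (s/\<sigma>)"
          by (simp add: diff_divide_distrib left_diff_distrib)
        have "\<i> * complex_of_real ((y0 - y) * s / \<sigma>) = \<i> * complex_of_real (y0 * s / \<sigma>) + (- \<i> * complex_of_real (y * (s/\<sigma>)))"
          unfolding r of_real_diff by (simp add: algebra_simps)
        thus ?thesis by (simp only: exp_add)
      qed
      thus ?thesis unfolding H_def by (simp add: mult_ac)
    qed
    thus ?thesis by simp
  qed
  have nIy: "norm (\<integral>y. H s y \<partial>lborel) \<le> nu s * B" for s
    unfolding inner_y using V[of "s/\<sigma>"] by (simp add: norm_mult mult_left_mono)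
  have A1: "norm (\<integral>s. (\<integral>y. H s y \<partial>lborel) \<partial>lborel) \<le> B"
  proof -
    have "integrable lborel (\<lambda>s. \<integral>y. H s y \<partial>lborel)"
      using lborel_pair.integrable_fst'[OF Hint] by simp
    hence "norm (\<integral>s. (\<integral>y. H s y \<partial>lborel) \<partial>lborel) \<le> (\<integral>s. nu s * B \<partial>lborel)"
      by (intro Bochner_Integration.integral_norm_bound_integral nIy) (use nu_integrable in auto)
    also have "\<dots> = B" by (simp add: nu_int1)
    finally show ?thesis .
  qed
  define K where "K y = nu ((y0 - y) / \<sigma>)" for y
  have inner_s: "(\<integral>s. H s y \<partial>lborel) = (sqrt (2*pi) * K y) *\<^sub>R g y" for y
  proof -
    have "H s y = g y * (nu s *\<^sub>R iexp (((y0 - y) / \<sigma>) * s))" for s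
      unfolding H_def by (simp add: mult_ac)
    hence "(\<integral>s. H s y \<partial>lborel) = g y * (\<integral>s. nu s *\<^sub>R iexp (((y0 - y) / \<sigma>) * s) \<partial>lborel)"
      by (simp only: integral_mult_right_zero)
    also have "\<dots> = g y * complex_of_real (exp (-(((y0 - y) / \<sigma>)\<^sup>2)/2))"
      by (simp only: gauss_char)
    also have "exp (-(((y0 - y) / \<sigma>)\<^sup>2)/2) = sqrt (2*pi) * K y"
      unfolding K_def std_normal_density_def by simp
    finally show ?thesis by (simp add: scaleR_conv_of_real mult_ac)
  qed
  have KI: "integrable lborel K" unfolding K_def using nu_affine(1)[OF \<sigma>] .
  have Kint: "(\<integral>y. K y \<partial>lborel) = \<sigma>" unfolding K_def using nu_affine(2)[OF \<sigma>] .
  have KaI: "integrable lborel (\<lambda>y. K y * \<bar>y - y0\<bar>)" unfolding K_def using nu_affine_abs(1)[OF \<sigma>] .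
  have Kaint: "(\<integral>y. K y * \<bar>y - y0\<bar> \<partial>lborel) = \<sigma>\<^sup>2 * sqrt (2/pi)" unfolding K_def using nu_affine_abs(2)[OF \<sigma>] .
  have Kn: "0 \<le> K y" for y unfolding K_def by simp
  have Km[measurable]: "K \<in> borel_measurable borel" unfolding K_def by measurable
  have dI: "integrable lborel (\<lambda>y. K y *\<^sub>R (g y - g y0))"
  proof (rule Bochner_Integration.integrable_bound[where f="\<lambda>y. \<Lambda> * (K y * \<bar>y - y0\<bar>)"])
    show "integrable lborel (\<lambda>y. \<Lambda> * (K y * \<bar>y - y0\<bar>))" using KaI by simp
    show "(\<lambda>y. K y *\<^sub>R (g y - g y0)) \<in> borel_measurable lborel" by measurable
    show "AE y in lborel. norm (K y *\<^sub>R (g y - g y0)) \<le> norm (\<Lambda> * (K y * \<bar>y - y0\<bar>))"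
    proof (rule AE_I2)
      fix y
      have "norm (K y *\<^sub>R (g y - g y0)) = K y * norm (g y - g y0)" using Kn[of y] by simp
      also have "\<dots> \<le> K y * (\<Lambda> * \<bar>y - y0\<bar>)" using lip Kn[of y] by (intro mult_left_mono) auto
      also have "\<dots> \<le> norm (\<Lambda> * (K y * \<bar>y - y0\<bar>))" using \<Lambda> Kn[of y] by (simp add: abs_mult mult_ac)
      finally show "norm (K y *\<^sub>R (g y - g y0)) \<le> norm (\<Lambda> * (K y * \<bar>y - y0\<bar>))" .
    qed
  qed
  have cI: "integrable lborel (\<lambda>y. K y *\<^sub>R g y0)" using KI by simp
  have gK: "(\<integral>y. K y *\<^sub>R g y \<partial>lborel) = \<sigma> *\<^sub>R g y0 + (\<integral>y. K y *\<^sub>R (g y - g y0) \<partial>lborel)"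
  proof -
    have "(\<lambda>y. K y *\<^sub>R g y) = (\<lambda>y. K y *\<^sub>R g y0 + K y *\<^sub>R (g y - g y0))"
      by (auto simp: algebra_simps)
    hence "(\<integral>y. K y *\<^sub>R g y \<partial>lborel) = (\<integral>y. K y *\<^sub>R g y0 \<partial>lborel) + (\<integral>y. K y *\<^sub>R (g y - g y0) \<partial>lborel)"
      using Bochner_Integration.integral_add[OF cI dI] by simp
    also have "(\<integral>y. K y *\<^sub>R g y0 \<partial>lborel) = \<sigma> *\<^sub>R g y0"
      using Kint KI by simp
    finally show ?thesis .
  qed
  have dN: "norm (\<integral>y. K y *\<^sub>R (g y - g y0) \<partial>lborel) \<le> \<Lambda> * \<sigma>\<^sup>2"
  proof -
    have "norm (\<integral>y. K y *\<^sub>R (g y - g y0) \<partial>lborel) \<le> (\<integral>y. \<Lambda> * (K y * \<bar>y - y0\<bar>) \<partial>lborel)"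
    proof (rule Bochner_Integration.integral_norm_bound_integral[OF dI])
      show "integrable lborel (\<lambda>y. \<Lambda> * (K y * \<bar>y - y0\<bar>))" using KaI by simp
      fix y
      have "norm (K y *\<^sub>R (g y - g y0)) = K y * norm (g y - g y0)" using Kn[of y] by simp
      also have "\<dots> \<le> K y * (\<Lambda> * \<bar>y - y0\<bar>)" using lip Kn[of y] by (intro mult_left_mono) auto
      finally show "norm (K y *\<^sub>R (g y - g y0)) \<le> \<Lambda> * (K y * \<bar>y - y0\<bar>)" by (simp add: mult_ac)
    qed
    also have "\<dots> = \<Lambda> * (\<sigma>\<^sup>2 * sqrt (2/pi))" using Kaint by simp
    also have "\<dots> \<le> \<Lambda> * (\<sigma>\<^sup>2 * 1)"
    proof -
      have "2/pi \<le> 1" using pi_gt3 by simp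
      hence "sqrt (2/pi) \<le> 1" by simp
      thus ?thesis using \<Lambda> by (intro mult_left_mono) auto
    qed
    finally show ?thesis by simp
  qed
  have gKI: "integrable lborel (\<lambda>y. K y *\<^sub>R g y)"
  proof -
    have "integrable lborel (\<lambda>y. K y *\<^sub>R g y0 + K y *\<^sub>R (g y - g y0))"
      using Bochner_Integration.integrable_add[OF cI dI] .
    moreover have "(\<lambda>y. K y *\<^sub>R g y0 + K y *\<^sub>R (g y - g y0)) = (\<lambda>y. K y *\<^sub>R g y)"
      by (auto simp: algebra_simps)
    ultimately show ?thesis by simp
  qed
  have "(\<integral>y. (\<integral>s. H s y \<partial>lborel) \<partial>lborel) = sqrt (2*pi) *\<^sub>R (\<integral>y. K y *\<^sub>R g y \<partial>lborel)"
    unfolding inner_s by (simp flip: scaleR_scaleR)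
  hence "sqrt (2*pi) * norm (\<integral>y. K y *\<^sub>R g y \<partial>lborel) \<le> B"
    using A1 Fub by simp
  moreover have "1 \<le> sqrt (2*pi)" using pi_gt3 by simp
  ultimately have nB: "norm (\<integral>y. K y *\<^sub>R g y \<partial>lborel) \<le> B"
    using mult_right_mono[of 1 "sqrt (2*pi)" "norm (\<integral>y. K y *\<^sub>R g y \<partial>lborel)"] by simp
  have "norm (g y0) * \<sigma> = norm (\<sigma> *\<^sub>R g y0)" using \<sigma> by simp
  also have "\<sigma> *\<^sub>R g y0 = (\<integral>y. K y *\<^sub>R g y \<partial>lborel) - (\<integral>y. K y *\<^sub>R (g y - g y0) \<partial>lborel)"
    using gK by simp
  also have "norm \<dots> \<le> norm (\<integral>y. K y *\<^sub>R g y \<partial>lborel) + norm (\<integral>y. K y *\<^sub>R (g y - g y0) \<partial>lborel)"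
    by (rule norm_triangle_ineq4)
  also have "\<dots> \<le> B + \<Lambda> * \<sigma>\<^sup>2" using nB dN by simp
  finally show ?thesis .
qed




lemma lip_from_deriv:
  fixes g :: "real \<Rightarrow> complex"
  assumes d: "\<And>y. (g has_vector_derivative g' y) (at y)" and b: "\<And>y. norm (g' y) \<le> L"
  shows "norm (g a - g b) \<le> L * \<bar>a - b\<bar>"
proof -
  have "norm (g a - g b) \<le> L * norm (a - b)"
  proof (rule differentiable_bound[where S=UNIV and f'="\<lambda>y h. h *\<^sub>R g' y"])
    show "(g has_derivative (\<lambda>h. h *\<^sub>R g' y)) (at y within UNIV)" for y
      using d[of y] by (simp add: has_vector_derivative_def)
    show "onorm (\<lambda>h. h *\<^sub>R g' y) \<le> L" for y
    proof -
      have "onorm (\<lambda>h::real. h *\<^sub>R g' y) = onorm (\<lambda>h::real. h) * norm (g' y)"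
        by (rule onorm_scaleR_left) (rule bounded_linear_ident)
      thus ?thesis using b[of y] by (simp add: onorm_id)
    qed
  qed auto
  thus ?thesis by simp
qed

definition gx :: "nat \<Rightarrow> (real \<Rightarrow> complex) \<Rightarrow> real \<Rightarrow> real \<Rightarrow> complex" where
  "gx k f x y = EE k 0 y * win f 0 0 (y - x)"

lemma gx_norm: "norm (gx k f x y) = norm (f (y - x))"
  by (simp add: gx_def win_def nd_0 norm_mult)

lemma stft_gx:
  assumes "\<And>y. u y = exp (\<i> * complex_of_real (y ^ (2 * k)))"
  shows "stft f u (x, \<xi>) = (\<integral>y. gx k f x y * exp (- \<i> * complex_of_real (y * \<xi>)) \<partial>lborel)"
  unfolding stft_def gx_def by (simp add: assms EE_def win_def nd_0 mult_ac)

lemma gx_cont: "schwartz f \<Longrightarrow> continuous_on UNIV (gx k f x)"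
  unfolding gx_def by (intro continuous_intros EE_cont continuous_on_compose2[OF win_cont]) auto

lemma gx_integrable: "schwartz f \<Longrightarrow> integrable lborel (gx k f x)"
  using integrable_Ig[of f k 0 0 0 x] unfolding gx_def by simp

lemma gx_lip:
  assumes f: "schwartz f"
  shows "\<exists>A\<ge>0. \<forall>x a b. norm (gx k f x a - gx k f x b) \<le> A * (1 + \<bar>x\<bar>)^(2*k-1) * \<bar>a - b\<bar>"
proof -
  obtain C1 where C1: "\<And>t. (1 + \<bar>t\<bar>)^(2*k-1) * norm (nth_deriv 0 f t) \<le> C1"
    using schwartz_bound1[OF f, of "2*k-1" 0] by blast
  obtain C2 where C2: "\<And>t. (1 + \<bar>t\<bar>)^0 * norm (nth_deriv 1 f t) \<le> C2"
    using schwartz_bound1[OF f, of 0 1] by blast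
  define A where "A = real (2*k) * \<bar>C1\<bar> + \<bar>C2\<bar>"
  have A0: "A \<ge> 0" unfolding A_def by simp
  show ?thesis
  proof (intro exI conjI allI)
    show "A \<ge> 0" by (rule A0)
    fix x a b
    define g' where "g' y = EE k 0 y * (of_nat 0 * win f (0-1) 0 (y - x) + win f 0 (Suc 0) (y - x))
       + (\<i> * complex_of_real (real (2*k) * y^(2*k-1) - 0) * EE k 0 y) * win f 0 0 (y - x)" for y
    have d: "(gx k f x has_vector_derivative g' y) (at y)" for y
      unfolding gx_def g'_def
      by (rule has_vector_derivative_mult[OF EE_deriv win_shift_deriv[OF f], THEN has_vector_derivative_eq_rhs])
         (simp add: algebra_simps)
    have bd: "norm (g' y) \<le> A * (1 + \<bar>x\<bar>)^(2*k-1)" for y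
    proof -
      define t where "t = y - x"
      have n1: "norm (win f 0 (Suc 0) t) \<le> \<bar>C2\<bar>"
        using C2[of t] by (simp add: win_def)
      have yb: "\<bar>y\<bar> \<le> (1 + \<bar>x\<bar>) * (1 + \<bar>t\<bar>)"
        unfolding t_def by (simp add: algebra_simps) (smt (verit) abs_ge_zero mult_nonneg_nonneg)
      have pyb: "\<bar>y\<bar>^(2*k-1) \<le> ((1 + \<bar>x\<bar>) * (1 + \<bar>t\<bar>))^(2*k-1)"
        by (intro power_mono yb) simp
      have "\<bar>y\<bar>^(2*k-1) * norm (f t) \<le> (1 + \<bar>x\<bar>)^(2*k-1) * ((1 + \<bar>t\<bar>)^(2*k-1) * norm (f t))"
        using mult_right_mono[OF pyb norm_ge_zero[of "f t"]] by (simp add: power_mult_distrib mult_ac)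
      also have "\<dots> \<le> (1 + \<bar>x\<bar>)^(2*k-1) * \<bar>C1\<bar>"
        using C1[of t] by (intro mult_left_mono) (auto simp: nd_0)
      finally have n2: "\<bar>y\<bar>^(2*k-1) * norm (f t) \<le> (1 + \<bar>x\<bar>)^(2*k-1) * \<bar>C1\<bar>" .
      have "norm (g' y) \<le> norm (win f 0 (Suc 0) t) + real (2*k) * \<bar>y\<bar>^(2*k-1) * norm (f t)"
        unfolding g'_def t_def[symmetric]
        by (rule order_trans[OF norm_triangle_ineq])
           (simp add: norm_mult win_def nd_0 power_abs abs_mult norm_power)
      also have "\<dots> \<le> \<bar>C2\<bar> + real (2*k) * ((1 + \<bar>x\<bar>)^(2*k-1) * \<bar>C1\<bar>)"
        using n1 n2 by (simp only: mult.assoc) (intro add_mono mult_left_mono, auto)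
      also have "\<dots> \<le> A * (1 + \<bar>x\<bar>)^(2*k-1)"
      proof -
        have "1 \<le> (1 + \<bar>x\<bar>)^(2*k-1)" by (simp add: one_le_power)
        hence "\<bar>C2\<bar> \<le> \<bar>C2\<bar> * (1 + \<bar>x\<bar>)^(2*k-1)"
          using mult_left_mono[of 1 "(1 + \<bar>x\<bar>)^(2*k-1)" "\<bar>C2\<bar>"] by simp
        thus ?thesis unfolding A_def by (simp add: algebra_simps)
      qed
      finally show ?thesis .
    qed
    show "norm (gx k f x a - gx k f x b) \<le> A * (1 + \<bar>x\<bar>)^(2*k-1) * \<bar>a - b\<bar>"
      by (rule lip_from_deriv[OF d bd])
  qed
qed


lemma final_arith:
  fixes m A C3 X :: real
  assumes m: "m > 0" and A: "A \<ge> 0" and X: "X \<ge> 1" and k: "k \<ge> 1"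
    and h: "\<And>\<sigma>. \<sigma> > 0 \<Longrightarrow> m * \<sigma> \<le> C3 / X^(2*k) + A * (1+X)^(2*k-1) * \<sigma>\<^sup>2"
  shows "m\<^sup>2 * X \<le> 4 * (A+1) * C3 * 2^(2*k-1)"
proof -
  define P where "P = (1+X)^(2*k-1)"
  have P1: "P \<ge> 1" unfolding P_def using X by (simp add: one_le_power)
  define \<sigma> where "\<sigma> = m / (2 * (A+1) * P)"
  have Ap: "A + 1 > 0" using A by simp
  have sp: "\<sigma> > 0" unfolding \<sigma>_def using m Ap P1 by simp
  have hs: "m * \<sigma> \<le> C3 / X^(2*k) + A * P * \<sigma>\<^sup>2" using h[OF sp] unfolding P_def .
  have e1: "(A+1) * P * \<sigma> = m / 2"
  proof -
    define Q where "Q = (A+1) * P"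
    have Q0: "Q \<noteq> 0" unfolding Q_def using Ap P1 by simp
    have "\<sigma> = m / (2 * Q)" unfolding \<sigma>_def Q_def by (simp add: mult.assoc)
    hence "Q * \<sigma> = m / 2" using Q0 by simp
    thus ?thesis unfolding Q_def .
  qed
  have "A * P * \<sigma>\<^sup>2 \<le> (A+1) * P * \<sigma>\<^sup>2" using P1 sp by (intro mult_right_mono) auto
  also have "\<dots> = ((A+1) * P * \<sigma>) * \<sigma>" by (simp add: power2_eq_square)
  also have "\<dots> = (m * \<sigma>) / 2" by (simp add: e1)
  finally have "A * P * \<sigma>\<^sup>2 \<le> (m * \<sigma>) / 2" .
  with hs have hb: "(m * \<sigma>) / 2 \<le> C3 / X^(2*k)" by linarith
  have e2: "(m * \<sigma>) / 2 = m\<^sup>2 / (4 * (A+1) * P)" unfolding \<sigma>_def by (simp add: power2_eq_square)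
  have XP: "0 < X^(2*k)" using X by simp
  have d: "0 < 4 * (A+1) * P" using Ap P1 by simp
  from hb e2 have "m\<^sup>2 / (4 * (A+1) * P) \<le> C3 / X^(2*k)" by simp
  hence q: "m\<^sup>2 * X^(2*k) \<le> C3 * (4 * (A+1) * P)"
    using XP d by (simp add: divide_le_eq le_divide_eq mult_ac)
  have C3: "C3 \<ge> 0"
  proof -
    have "0 \<le> m\<^sup>2 * X^(2*k)" by simp
    hence "0 \<le> C3 * (4 * (A+1) * P)" using q by linarith
    thus ?thesis using d by (simp add: zero_le_mult_iff)
  qed
  have "P \<le> (2*X)^(2*k-1)" unfolding P_def using X by (intro power_mono) auto
  also have "\<dots> = 2^(2*k-1) * X^(2*k-1)" by (simp add: power_mult_distrib)
  finally have Pb: "P \<le> 2^(2*k-1) * X^(2*k-1)" .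
  have e3: "X^(2*k) = X * X^(2*k-1)"
  proof -
    have "2*k = Suc (2*k-1)" using k by simp
    hence "X^(2*k) = X^(Suc (2*k-1))" by (simp only:)
    thus ?thesis by simp
  qed
  have "m\<^sup>2 * X * X^(2*k-1) \<le> C3 * (4 * (A+1) * P)" using q e3 by (simp add: mult_ac)
  also have "\<dots> \<le> C3 * (4 * (A+1) * (2^(2*k-1) * X^(2*k-1)))"
    using Pb C3 Ap by (intro mult_left_mono) auto
  finally have "(m\<^sup>2 * X) * X^(2*k-1) \<le> (4 * (A+1) * C3 * 2^(2*k-1)) * X^(2*k-1)"
    by (simp add: mult_ac)
  moreover have "0 < X^(2*k-1)" using X by simp
  ultimately show ?thesis by (rule mult_right_le_imp_le)
qed


lemma sgn_odd_pow:
  fixes sg X :: real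
  assumes "sg = 1 \<or> sg = -1" "k \<ge> 1"
  shows "(sg * X)^(2*k-1) = sg * X^(2*k-1)"
proof -
  have "odd (2*k-1)" using assms(2) by simp
  thus ?thesis using assms(1) by (auto simp: power_mult_distrib)
qed

lemma dirB:
  assumes k: "k \<ge> 2" and u: "\<And>y. u y = exp (\<i> * complex_of_real (y ^ (2 * k)))"
    and f: "schwartz f" and fnz: "f \<noteq> (\<lambda>_. 0)" and \<xi>0: "\<xi>0 \<noteq> 0"
  shows "(0, \<xi>0) \<in> gabor_WF f u"
proof -
  have k1: "k \<ge> 1" using k by simp
  obtain s0 where s0: "f s0 \<noteq> 0" using fnz by auto
  define m where "m = norm (f s0)"
  have m0: "m > 0" unfolding m_def using s0 by simp
  obtain A where A0: "A \<ge> 0" and Alip: "\<And>x a b. norm (gx k f x a - gx k f x b) \<le> A * (1 + \<bar>x\<bar>)^(2*k-1) * \<bar>a - b\<bar>"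
    using gx_lip[OF f, of k] by blast
  have notex: "\<not> (\<exists>\<Gamma>. open \<Gamma> \<and> conic \<Gamma> \<and> (0, \<xi>0) \<in> \<Gamma> \<and>
          (\<forall>N::real. N \<ge> 0 \<longrightarrow> (\<exists>C. \<forall>z\<in>\<Gamma>. (sqrt (1 + (norm z)\<^sup>2)) powr N * norm (stft f u z) \<le> C)))"
  proof
    assume "\<exists>\<Gamma>. open \<Gamma> \<and> conic \<Gamma> \<and> (0, \<xi>0) \<in> \<Gamma> \<and>
          (\<forall>N::real. N \<ge> 0 \<longrightarrow> (\<exists>C. \<forall>z\<in>\<Gamma>. (sqrt (1 + (norm z)\<^sup>2)) powr N * norm (stft f u z) \<le> C))"
    then obtain \<Gamma> where op: "open \<Gamma>" and co: "conic \<Gamma>" and mem: "(0, \<xi>0) \<in> \<Gamma>"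
      and bnd: "\<And>N::real. N \<ge> 0 \<Longrightarrow> \<exists>C. \<forall>z\<in>\<Gamma>. (sqrt (1 + (norm z)\<^sup>2)) powr N * norm (stft f u z) \<le> C"
      by blast
    obtain r where r: "r > 0" and rb: "ball (0, \<xi>0) r \<subseteq> \<Gamma>"
      using op mem open_contains_ball by blast
    obtain C where C: "\<And>z. z \<in> \<Gamma> \<Longrightarrow> (sqrt (1 + (norm z)\<^sup>2)) powr (real (2*k)) * norm (stft f u z) \<le> C"
      using bnd[of "real (2*k)"] by auto
    define sg where "sg = sgn \<xi>0"
    have sg1: "sg = 1 \<or> sg = -1" unfolding sg_def using \<xi>0 by (auto simp: sgn_real_def)
    have sgsg: "sg * sg = 1" using sg1 by auto
    have sgxi0: "sg * \<xi>0 = \<bar>\<xi>0\<bar>" unfolding sg_def by (simp add: sgn_mult_self_eq abs_real_def sgn_real_def)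
    define \<epsilon> where "\<epsilon> = r / (2 * \<bar>\<xi>0\<bar>)"
    have \<epsilon>0: "\<epsilon> > 0" unfolding \<epsilon>_def using r \<xi>0 by simp
    have inG: "(x, \<xi>) \<in> \<Gamma>" if p: "0 < sg * \<xi>" and q: "\<bar>x\<bar> \<le> \<epsilon> * (sg * \<xi>)" for x \<xi>
    proof -
      define t where "t = \<bar>\<xi>0\<bar> / (sg * \<xi>)"
      have t0: "t > 0" unfolding t_def using p \<xi>0 by simp
      have x0: "\<xi>0 = sg * \<bar>\<xi>0\<bar>" unfolding sg_def by (simp add: sgn_real_def abs_real_def)
      have tx: "t * \<xi> = \<xi>0"
        using sg1 p x0 by (elim disjE) (simp_all add: t_def field_simps)
      have "\<bar>t * x\<bar> \<le> t * (\<epsilon> * (sg * \<xi>))" using q t0 by (simp add: abs_mult mult_left_mono)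
      also have "\<dots> = \<epsilon> * \<bar>\<xi>0\<bar>" unfolding t_def using p by (simp, auto)
      also have "\<dots> = r / 2" unfolding \<epsilon>_def using \<xi>0 by simp
      finally have "\<bar>t * x\<bar> < r" using r by simp
      hence "(t * x, t * \<xi>) \<in> ball (0, \<xi>0) r"
        by (simp add: tx dist_Pair_Pair dist_real_def)
      hence "t *\<^sub>R (x, \<xi>) \<in> \<Gamma>" using rb by auto
      moreover have "1/t > 0" using t0 by simp
      ultimately have "(1/t) *\<^sub>R (t *\<^sub>R (x, \<xi>)) \<in> \<Gamma>" using co unfolding conic_def by blast
      moreover have "(1/t) *\<^sub>R (t *\<^sub>R (x, \<xi>)) = (x, \<xi>)" using t0 by simp
      ultimately show ?thesis by simp
    qed
    obtain C2 R2 where R2: "R2 \<ge> 1" and C2: "\<And>x \<xi>. R2 \<le> \<bar>x\<bar> \<Longrightarrow>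
        real k * \<bar>x\<bar>^(2*k-1) \<le> \<bar>real (2*k) * x^(2*k-1) - \<xi>\<bar> \<Longrightarrow> norm (Ig f k 0 0 x \<xi>) \<le> C2 / \<bar>x\<bar>^(2*k)"
      using KEY[OF f k1, of 0 "2*k"] by auto
    define C3 where "C3 = \<bar>C\<bar> + \<bar>C2\<bar>"
    have decay: "norm (stft f u (sg * X, \<xi>)) \<le> C3 / X^(2*k)"
      if X: "X \<ge> R2" "X \<ge> 1 / \<epsilon>" for X \<xi>
    proof -
      have X1: "X \<ge> 1" using X R2 by simp
      have Xp: "0 < X^(2*k)" using X1 by simp
      have ax: "\<bar>sg * X\<bar> = X" using sg1 X1 by auto
      show ?thesis
      proof (cases "X / \<epsilon> < sg * \<xi>")
        case True
        have p: "0 < sg * \<xi>" using True X1 \<epsilon>0 by (smt (verit) divide_pos_pos)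
        have "\<bar>sg * X\<bar> \<le> \<epsilon> * (sg * \<xi>)" using True \<epsilon>0 ax by (simp add: field_simps)
        hence z: "(sg * X, \<xi>) \<in> \<Gamma>" by (rule inG[OF p])
        have "X^(2*k) \<le> sw (sg * X, \<xi>) ^ (2*k)"
          using sw_ge_fst[of "(sg * X, \<xi>)"] ax X1 by (intro power_mono) auto
        hence "X^(2*k) * norm (stft f u (sg * X, \<xi>)) \<le> sw (sg * X, \<xi>) ^ (2*k) * norm (stft f u (sg * X, \<xi>))"
          by (intro mult_right_mono) auto
        also have "\<dots> = sw (sg * X, \<xi>) powr (real (2*k)) * norm (stft f u (sg * X, \<xi>))"
        proof -
          have "sw (sg * X, \<xi>) powr real (2*k) = sw (sg * X, \<xi>) ^ (2*k)"
            by (rule powr_realpow) (use sw_ge1[of "(sg*X, \<xi>)"] in linarith)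
          thus ?thesis by (simp only:)
        qed
        also have "\<dots> \<le> C" using C[OF z] unfolding sw_def .
        also have "\<dots> \<le> C3" unfolding C3_def by simp
        finally show ?thesis using Xp by (simp add: field_simps)
      next
        case False
        hence le: "sg * \<xi> \<le> X / \<epsilon>" by simp
        have D: "real k * \<bar>sg * X\<bar>^(2*k-1) \<le> \<bar>real (2*k) * (sg * X)^(2*k-1) - \<xi>\<bar>"
        proof -
          have e: "real (2*k) * (sg * X)^(2*k-1) - \<xi> = sg * (real (2*k) * X^(2*k-1) - sg * \<xi>)"
            unfolding sgn_odd_pow[OF sg1 k1] using sgsg by (simp add: algebra_simps)
          have "\<bar>real (2*k) * (sg * X)^(2*k-1) - \<xi>\<bar> = \<bar>real (2*k) * X^(2*k-1) - sg * \<xi>\<bar>"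
            unfolding e using sg1 by (auto simp: abs_mult)
          moreover have "X / \<epsilon> \<le> real k * X^(2*k-1)"
          proof -
            have "X / \<epsilon> \<le> X * X" using X(2) X1 \<epsilon>0
              by (simp add: divide_le_eq)
            also have "\<dots> = X^2" by (simp add: power2_eq_square)
            also have "\<dots> \<le> X^(2*k-1)" using X1 k by (intro power_increasing) auto
            also have "\<dots> \<le> real k * X^(2*k-1)" using k1 X1 by (simp add: mult_le_cancel_right1)
            finally show ?thesis .
          qed
          ultimately show ?thesis using le ax by simp
        qed
        have "norm (Ig f k 0 0 (sg * X) \<xi>) \<le> C2 / \<bar>sg * X\<bar>^(2*k)"
          by (rule C2[OF _ D]) (use ax X in simp)
        also have "\<dots> \<le> C3 / X^(2*k)" unfolding ax C3_def using Xp by (intro divide_right_mono) auto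
        finally show ?thesis using stft_Ig[OF u, of f "(sg * X, \<xi>)"] by simp
      qed
    qed
    have main: "m\<^sup>2 * X \<le> 4 * (A+1) * C3 * 2^(2*k-1)" if X: "X \<ge> R2" "X \<ge> 1 / \<epsilon>" for X
    proof (rule final_arith[OF m0 A0 _ k1])
      show X1: "1 \<le> X" using X R2 by simp
      fix \<sigma> :: real assume \<sigma>: "\<sigma> > 0"
      have ax: "\<bar>sg * X\<bar> = X" using sg1 X1 by auto
      have "norm (gx k f (sg * X) (sg * X + s0)) * \<sigma> \<le> C3 / X^(2*k) + A * (1 + \<bar>sg * X\<bar>)^(2*k-1) * \<sigma>\<^sup>2"
      proof (rule inv_bound[OF gx_cont[OF f] gx_integrable[OF f] _ _ _ \<sigma>])
        show "norm (gx k f (sg * X) a - gx k f (sg * X) b) \<le> A * (1 + \<bar>sg * X\<bar>)^(2*k-1) * \<bar>a - b\<bar>" for a b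
          by (rule Alip)
        show "0 \<le> A * (1 + \<bar>sg * X\<bar>)^(2*k-1)" using A0 by simp
        show "norm (\<integral>y. gx k f (sg * X) y * exp (- \<i> * complex_of_real (y * \<xi>)) \<partial>lborel) \<le> C3 / X^(2*k)" for \<xi>
          using decay[OF X, of \<xi>] stft_gx[OF u, of f "sg * X" \<xi>] by simp
      qed
      moreover have "norm (gx k f (sg * X) (sg * X + s0)) = m" unfolding m_def by (simp add: gx_norm)
      ultimately show "m * \<sigma> \<le> C3 / X^(2*k) + A * (1 + X)^(2*k-1) * \<sigma>\<^sup>2" using ax by simp
    qed
    define Q where "Q = 4 * (A+1) * C3 * 2^(2*k-1)"
    define Y where "Y = Q / m\<^sup>2"
    have mY: "m\<^sup>2 * Y = Q" unfolding Y_def using m0 by simp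
    define X where "X = max R2 (1/\<epsilon>) + Y + 1"
    have C3n: "C3 \<ge> 0" unfolding C3_def by simp
    have "0 \<le> Y" unfolding Y_def Q_def using A0 C3n by simp
    hence X: "X \<ge> R2" "X \<ge> 1/\<epsilon>" unfolding X_def by auto
    have "m\<^sup>2 * X = m\<^sup>2 * (max R2 (1/\<epsilon>) + 1) + m\<^sup>2 * Y"
      unfolding X_def by (simp add: algebra_simps)
    moreover have "0 < m\<^sup>2 * (max R2 (1/\<epsilon>) + 1)" using m0 R2 by (intro mult_pos_pos) auto
    ultimately have "4 * (A+1) * C3 * 2^(2*k-1) < m\<^sup>2 * X" using mY unfolding Q_def by linarith
    with main[OF X] show False by linarith
  qed
  have "(0::real, \<xi>0) \<noteq> 0" using \<xi>0 by (simp add: zero_prod_def)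
  thus ?thesis unfolding gabor_WF_def using notex by blast
qed


theorem corollary8p3:
  fixes k :: nat and \<phi> u :: "real \<Rightarrow> complex"
  assumes "k \<ge> 2"
    and "\<And>x. u x = exp (\<i> * complex_of_real (x ^ (2 * k)))"
    and "schwartz \<phi>" and "\<phi> \<noteq> (\<lambda>_. 0)"
  shows "gabor_WF \<phi> u = {0} \<times> (UNIV - {0})"
proof
  show "gabor_WF \<phi> u \<subseteq> {0} \<times> (UNIV - {0})"
  proof
    fix z assume z: "z \<in> gabor_WF \<phi> u"
    obtain x \<xi> where zz: "z = (x, \<xi>)" by (cases z)
    have x0: "x = 0"
    proof (rule ccontr)
      assume "x \<noteq> 0"
      from dirA[OF assms(1,2,3) this, of \<xi>] z zz show False by simp
    qed
    have "z \<noteq> 0" using z unfolding gabor_WF_def by simp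
    hence "\<xi> \<noteq> 0" using zz x0 by (simp add: zero_prod_def)
    thus "z \<in> {0} \<times> (UNIV - {0})" using zz x0 by simp
  qed
next
  show "{0} \<times> (UNIV - {0}) \<subseteq> gabor_WF \<phi> u"
  proof
    fix z assume "z \<in> ({0::real} \<times> (UNIV - {0::real}))"
    then obtain \<xi> where zz: "z = (0, \<xi>)" and "\<xi> \<noteq> 0" by auto
    thus "z \<in> gabor_WF \<phi> u" using dirB[OF assms] by simp
  qed
qed

end
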